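(* For each $2p\in\{50, 98, 170, 242, 290, 338\}$ there exists a cyclic DCA$(4,2p+1;2p)$ satisfying P1 and P2.
   Context: A difference covering array DCA$(k,\eta;n)$ over $\mathbb{Z}_n$ (a cyclic DCA) is an $\eta\times k$ matrix $Q=[q(i,j)]$ with entries in $\mathbb{Z}_n$ such that for every pair of distinct columns $j,j'$ the multiset $\{q(i,j)-q(i,j') : 0\le i\le \eta-1\}$ contains every element of $\mathbb{Z}_n$ at least once. A DCA$(k,n+1;n)$ is taken in normalized form: all entries of its last row (row $n$) and last column (column $k-1$) equal $0$. It satisfies P1 if $0$ occurs at least twice in every column, and P2 if for all distinct columns $j,j'$ with $j\neq k-1\neq j'$, the set $\{q(i,j)-q(i,j') : 0\le i\le n-1\}$ equals $\mathbb{Z}_n\setminus\{0\}$. *)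

theory Defs
  imports Main
begin

text \<open>An eta x k matrix over Z_n is represented as Q :: nat => nat => int,
  where Q i j is the entry in row i (i < eta) and column j (j < k);
  entries are taken as representatives in {0..<n}, and differences are
  computed modulo n.\<close>

definition is_DCA :: "nat \<Rightarrow> nat \<Rightarrow> nat \<Rightarrow> (nat \<Rightarrow> nat \<Rightarrow> int) \<Rightarrow> bool" where
  "is_DCA k eta n Q \<longleftrightarrow>
     (\<forall>i<eta. \<forall>j<k. Q i j \<in> {0..<int n}) \<and>
     (\<forall>j<k. \<forall>j'<k. j \<noteq> j' \<longrightarrow>
        (\<forall>d\<in>{0..<int n}. \<exists>i<eta. (Q i j - Q i j') mod int n = d))"

definition normalized_DCA :: "nat \<Rightarrow> nat \<Rightarrow> (nat \<Rightarrow> nat \<Rightarrow> int) \<Rightarrow> bool" where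
  "normalized_DCA k n Q \<longleftrightarrow>
     is_DCA k (n + 1) n Q \<and>
     (\<forall>j<k. Q n j = 0) \<and> (\<forall>i\<le>n. Q i (k - 1) = 0)"

definition DCA_P1 :: "nat \<Rightarrow> nat \<Rightarrow> (nat \<Rightarrow> nat \<Rightarrow> int) \<Rightarrow> bool" where
  "DCA_P1 k n Q \<longleftrightarrow> (\<forall>j<k. card {i. i \<le> n \<and> Q i j = 0} \<ge> 2)"

definition DCA_P2 :: "nat \<Rightarrow> nat \<Rightarrow> (nat \<Rightarrow> nat \<Rightarrow> int) \<Rightarrow> bool" where
  "DCA_P2 k n Q \<longleftrightarrow>
     (\<forall>j<k - 1. \<forall>j'<k - 1. j \<noteq> j' \<longrightarrow>
        (\<lambda>i. (Q i j - Q i j') mod int n) ` {0..<n} = {1..<int n})"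

end

theory Submission
  imports Defs
begin

fun merge :: "int list \<Rightarrow> int list \<Rightarrow> int list" where
  "merge [] ys = ys"
| "merge xs [] = xs"
| "merge (x#xs) (y#ys) = (if x \<le> y then x # merge xs (y#ys) else y # merge (x#xs) ys)"

fun msort :: "int list \<Rightarrow> int list" where
  "msort xs = (if length xs \<le> 1 then xs
     else merge (msort (take (length xs div 2) xs)) (msort (drop (length xs div 2) xs)))"

declare msort.simps [simp del]

lemma set_merge: "set (merge xs ys) = set xs \<union> set ys"
  by (induction xs ys rule: merge.induct) auto

lemma set_msort: "set (msort xs) = set xs"
proof (induction xs rule: msort.induct)
  case (1 xs)
  show ?case
  proof (cases "length xs \<le> 1")
    case True then show ?thesis by (simp add: msort.simps)
  next
    case False
    then have "set (msort xs) = set (msort (take (length xs div 2) xs)) \<union> set (msort (drop (length xs div 2) xs))"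
      by (simp add: msort.simps set_merge)
    also have "\<dots> = set (take (length xs div 2) xs) \<union> set (drop (length xs div 2) xs)"
      using 1 False by simp
    also have "\<dots> = set xs" by (metis set_append append_take_drop_id)
    finally show ?thesis .
  qed
qed

lemma neg_diff:
  assumes "(\<lambda>i. (x i - y i) mod int n) ` S = {1..<int n}"
  shows "(\<lambda>i. (y i - x i) mod int n) ` S = {1..<int n}"
proof
  show "(\<lambda>i. (y i - x i) mod int n) ` S \<subseteq> {1..<int n}"
  proof
    fix e assume "e \<in> (\<lambda>i. (y i - x i) mod int n) ` S"
    then obtain i where i: "i \<in> S" "e = (y i - x i) mod int n" by auto
    have d: "(x i - y i) mod int n \<in> {1..<int n}" using assms i(1) by blast
    have m: "(- (x i - y i)) mod int n = int n - (x i - y i) mod int n"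
      using d by (subst zmod_zminus1_eq_if) auto
    have "e = int n - (x i - y i) mod int n" using i(2) m by simp
    then show "e \<in> {1..<int n}" using d by auto
  qed
next
  show "{1..<int n} \<subseteq> (\<lambda>i. (y i - x i) mod int n) ` S"
  proof
    fix e assume e: "e \<in> {1..<int n}"
    then have "int n - e \<in> {1..<int n}" by auto
    then obtain i where i: "i \<in> S" "(x i - y i) mod int n = int n - e" using assms
      by (metis (no_types, lifting) imageE)
    have m: "(- (x i - y i)) mod int n = int n - (x i - y i) mod int n"
      using i(2) e by (subst zmod_zminus1_eq_if) auto
    have "(y i - x i) mod int n = e" using m i(2) by simp
    then show "e \<in> (\<lambda>i. (y i - x i) mod int n) ` S" using i(1) by force
  qed
qed

lemma construct:
  fixes n :: nat and f :: "nat \<Rightarrow> nat \<Rightarrow> int"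
  assumes n1: "n \<ge> 1"
    and perm: "\<And>j. j < 3 \<Longrightarrow> f j ` {0..<n} = {0..<int n}"
    and diff: "\<And>j j'. j < 3 \<Longrightarrow> j' < 3 \<Longrightarrow> j \<noteq> j' \<Longrightarrow>
          (\<lambda>i. (f j i - f j' i) mod int n) ` {0..<n} = {1..<int n}"
  shows "\<exists>Q. normalized_DCA 4 n Q \<and> DCA_P1 4 n Q \<and> DCA_P2 4 n Q"
proof -
  define Q where "Q = (\<lambda>i j. if i < n \<and> j < 3 then f j i else 0)"
  have range: "\<forall>i<n+1. \<forall>j<4. Q i j \<in> {0..<int n}"
  proof (intro allI impI)
    fix i j :: nat assume "i < n+1" "j < 4"
    show "Q i j \<in> {0..<int n}"
    proof (cases "i < n \<and> j < 3")
      case True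
      then have "f j i \<in> f j ` {0..<n}" by auto
      then show ?thesis using perm True by (simp add: Q_def)
    qed (use n1 in \<open>auto simp: Q_def\<close>)
  qed
  have cover: "\<forall>j<4. \<forall>j'<4. j \<noteq> j' \<longrightarrow>
        (\<forall>d\<in>{0..<int n}. \<exists>i<n+1. (Q i j - Q i j') mod int n = d)"
  proof (intro allI impI ballI)
    fix j j' :: nat and d :: int
    assume j: "j < 4" and j': "j' < 4" and jj: "j \<noteq> j'" and d: "d \<in> {0..<int n}"
    show "\<exists>i<n+1. (Q i j - Q i j') mod int n = d"
    proof (cases "d = 0")
      case True then show ?thesis by (rule_tac x=n in exI) (simp add: Q_def)
    next
      case False
      then have d1: "d \<in> {1..<int n}" using d by auto
      show ?thesis
      proof (cases "j < 3 \<and> j' < 3")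
        case True
        then have "d \<in> (\<lambda>i. (f j i - f j' i) mod int n) ` {0..<n}" using diff jj d1 by blast
        then obtain i where "i < n" "(f j i - f j' i) mod int n = d" by auto
        then show ?thesis using True by (rule_tac x=i in exI) (simp add: Q_def)
      next
        case False
        then have "(j < 3 \<and> j' = 3) \<or> (j = 3 \<and> j' < 3)" using j j' jj by auto
        then show ?thesis
        proof
          assume a: "j < 3 \<and> j' = 3"
          then have "d \<in> f j ` {0..<n}" using perm d by blast
          then obtain i where "i < n" "f j i = d" by auto
          then show ?thesis using a d by (rule_tac x=i in exI) (simp add: Q_def)
        next
          assume a: "j = 3 \<and> j' < 3"
          have "int n - d \<in> {0..<int n}" using d1 by auto
          then have "int n - d \<in> f j' ` {0..<n}" using perm a by blast
          then obtain i where i: "i < n" "f j' i = int n - d" by auto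
          have "(0 - (int n - d)) mod int n = d" using d by (simp add: mod_pos_pos_trivial)
          then show ?thesis using a i by (rule_tac x=i in exI) (simp add: Q_def)
        qed
      qed
    qed
  qed
  have norm: "normalized_DCA 4 n Q"
    unfolding normalized_DCA_def is_DCA_def using range cover by (simp add: Q_def)
  have p1: "DCA_P1 4 n Q"
    unfolding DCA_P1_def
  proof (intro allI impI)
    fix j :: nat assume j: "j < 4"
    obtain i0 where i0: "i0 < n" "Q i0 j = 0"
    proof (cases "j < 3")
      case True
      have "0 \<in> f j ` {0..<n}" using perm[OF True] n1 by auto
      then obtain i where "i < n" "f j i = 0" by auto
      then show ?thesis using that True by (simp add: Q_def)
    next
      case False
      then show ?thesis using that[of 0] n1 by (simp add: Q_def)
    qed
    have sub: "{i0, n} \<subseteq> {i. i \<le> n \<and> Q i j = 0}" using i0 by (auto simp: Q_def)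
    have fin: "finite {i. i \<le> n \<and> Q i j = 0}" by simp
    have "card {i0, n} = 2" using i0 by simp
    then show "2 \<le> card {i. i \<le> n \<and> Q i j = 0}" using card_mono[OF fin sub] by simp
  qed
  have p2: "DCA_P2 4 n Q"
    unfolding DCA_P2_def
  proof (intro allI impI)
    fix j j' :: nat assume a: "j < 4 - 1" "j' < 4 - 1" "j \<noteq> j'"
    have "(\<lambda>i. (Q i j - Q i j') mod int n) ` {0..<n} = (\<lambda>i. (f j i - f j' i) mod int n) ` {0..<n}"
      using a by (intro image_cong) (auto simp: Q_def)
    then show "(\<lambda>i. (Q i j - Q i j') mod int n) ` {0..<n} = {1..<int n}" using diff a by simp
  qed
  show ?thesis using norm p1 p2 by blast
qed

lemma image_nth_set: "length xs = n \<Longrightarrow> (\<lambda>i. xs ! i) ` {0..<n} = set xs"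
  by (auto simp: set_conv_nth image_def)

lemma set_upto_int: "n \<ge> 1 \<Longrightarrow> set [0..int n - 1] = {0..<int n}"
  by auto

lemma map2_set:
  assumes "length xs = n" "length ys = n"
  shows "(\<lambda>i. g (xs ! i) (ys ! i)) ` {0..<n} = set (map2 g xs ys)"
proof -
  have "set (map2 g xs ys) = (\<lambda>i. map2 g xs ys ! i) ` {0..<n}"
    using image_nth_set[of "map2 g xs ys" n] assms by simp
  also have "\<dots> = (\<lambda>i. g (xs ! i) (ys ! i)) ` {0..<n}"
    using assms by (intro image_cong) auto
  finally show ?thesis by simp
qed

lemma construct_lists:
  fixes as bs cs :: "int list" and n :: nat
  assumes la: "length as = n" and lb: "length bs = n" and lc: "length cs = n" and n2: "n \<ge> 2"
    and ma: "msort as = [0..int n - 1]" and mb: "msort bs = [0..int n - 1]"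
    and mc: "msort cs = [0..int n - 1]"
    and mab: "msort (map2 (\<lambda>x y. (x - y) mod int n) as bs) = [1..int n div 2] @ [int n div 2..int n - 1]"
    and mac: "msort (map2 (\<lambda>x y. (x - y) mod int n) as cs) = [1..int n div 2] @ [int n div 2..int n - 1]"
    and mbc: "msort (map2 (\<lambda>x y. (x - y) mod int n) bs cs) = [1..int n div 2] @ [int n div 2..int n - 1]"
  shows "\<exists>Q. normalized_DCA 4 n Q \<and> DCA_P1 4 n Q \<and> DCA_P2 4 n Q"
proof -
  define f :: "nat \<Rightarrow> nat \<Rightarrow> int" where "f = (\<lambda>j i. if j = 0 then as ! i else if j = 1 then bs ! i else cs ! i)"
  have hset: "set [1..int n div 2] \<union> set [int n div 2..int n - 1] = {1..<int n}"
    using n2 by auto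
  have sa: "set as = {0..<int n}"
  proof -
    have "set as = set [0..int n - 1]" using set_msort[of as] ma by simp
    also have "\<dots> = {0..<int n}" by auto
    finally show ?thesis .
  qed
  have sb: "set bs = {0..<int n}"
  proof -
    have "set bs = set [0..int n - 1]" using set_msort[of bs] mb by simp
    also have "\<dots> = {0..<int n}" by auto
    finally show ?thesis .
  qed
  have sc: "set cs = {0..<int n}"
  proof -
    have "set cs = set [0..int n - 1]" using set_msort[of cs] mc by simp
    also have "\<dots> = {0..<int n}" by auto
    finally show ?thesis .
  qed
  have dab: "set (map2 (\<lambda>x y. (x - y) mod int n) as bs) = {1..<int n}"
    using set_msort[of "map2 (\<lambda>x y. (x - y) mod int n) as bs"] mab hset by simp
  have dac: "set (map2 (\<lambda>x y. (x - y) mod int n) as cs) = {1..<int n}"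
    using set_msort[of "map2 (\<lambda>x y. (x - y) mod int n) as cs"] mac hset by simp
  have dbc: "set (map2 (\<lambda>x y. (x - y) mod int n) bs cs) = {1..<int n}"
    using set_msort[of "map2 (\<lambda>x y. (x - y) mod int n) bs cs"] mbc hset by simp
  have Dab: "(\<lambda>i. (f 0 i - f 1 i) mod int n) ` {0..<n} = {1..<int n}"
    using map2_set[OF la lb, of "\<lambda>x y. (x - y) mod int n"] dab by (simp add: f_def)
  have Dac: "(\<lambda>i. (f 0 i - f 2 i) mod int n) ` {0..<n} = {1..<int n}"
    using map2_set[OF la lc, of "\<lambda>x y. (x - y) mod int n"] dac by (simp add: f_def)
  have Dbc: "(\<lambda>i. (f 1 i - f 2 i) mod int n) ` {0..<n} = {1..<int n}"
    using map2_set[OF lb lc, of "\<lambda>x y. (x - y) mod int n"] dbc by (simp add: f_def)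
  show ?thesis
  proof (rule construct)
    show "1 \<le> n" using n2 by simp
  next
    fix j :: nat assume "j < 3"
    then have "j = 0 \<or> j = 1 \<or> j = 2" by auto
    then show "f j ` {0..<n} = {0..<int n}"
      using image_nth_set[OF la] image_nth_set[OF lb] image_nth_set[OF lc] sa sb sc
      by (auto simp: f_def)
  next
    fix j j' :: nat assume "j < 3" "j' < 3" "j \<noteq> j'"
    then have "(j = 0 \<and> j' = 1) \<or> (j = 0 \<and> j' = 2) \<or> (j = 1 \<and> j' = 2) \<or>
               (j = 1 \<and> j' = 0) \<or> (j = 2 \<and> j' = 0) \<or> (j = 2 \<and> j' = 1)" by auto
    then show "(\<lambda>i. (f j i - f j' i) mod int n) ` {0..<n} = {1..<int n}"
      using Dab Dac Dbc neg_diff[OF Dab] neg_diff[OF Dac] neg_diff[OF Dbc] by auto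
  qed
qed

definition a50 :: "int list" where "a50 = [24, 0, 1, 27, 3, 29, 30, 6, 7, 8, 34, 10, 11, 12, 38, 39, 15, 41, 17, 18, 44, 45, 21, 47, 23, 49, 25, 26, 2, 28, 4, 5, 31, 32, 33, 9, 35, 36, 37, 13, 14, 40, 16, 42, 43, 19, 20, 46, 22, 48]"
definition b50 :: "int list" where "b50 = [4, 2, 0, 48, 46, 44, 42, 40, 38, 36, 9, 32, 30, 28, 1, 24, 47, 45, 43, 16, 39, 12, 10, 33, 31, 26, 49, 22, 20, 18, 41, 14, 37, 35, 8, 6, 29, 27, 25, 23, 21, 19, 17, 15, 13, 11, 34, 7, 5, 3]"
definition c50 :: "int list" where "c50 = [30, 37, 19, 26, 33, 40, 22, 29, 11, 43, 25, 7, 14, 21, 28, 35, 17, 49, 31, 13, 20, 2, 9, 16, 48, 47, 4, 36, 18, 0, 32, 39, 46, 3, 10, 42, 24, 6, 38, 45, 27, 34, 41, 23, 5, 12, 44, 1, 8, 15]"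
lemma a50_ms: "msort a50 = [0..49]" unfolding a50_def by code_simp
lemma b50_ms: "msort b50 = [0..49]" unfolding b50_def by code_simp
lemma c50_ms: "msort c50 = [0..49]" unfolding c50_def by code_simp
lemma ab50_ms: "msort (map2 (\<lambda>x y. (x - y) mod 50) a50 b50) = [1..25] @ [25..49]" unfolding a50_def b50_def by code_simp
lemma ac50_ms: "msort (map2 (\<lambda>x y. (x - y) mod 50) a50 c50) = [1..25] @ [25..49]" unfolding a50_def c50_def by code_simp
lemma bc50_ms: "msort (map2 (\<lambda>x y. (x - y) mod 50) b50 c50) = [1..25] @ [25..49]" unfolding b50_def c50_def by code_simp
lemma case50: "\<exists>Q. normalized_DCA 4 50 Q \<and> DCA_P1 4 50 Q \<and> DCA_P2 4 50 Q"
proof (rule construct_lists[of "a50" "50" "b50" "c50"])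
  show "length a50 = 50" "length b50 = 50" "length c50 = 50" by (simp_all add: a50_def b50_def c50_def)
qed (simp_all add: a50_ms b50_ms c50_ms ab50_ms ac50_ms bc50_ms)

definition a98 :: "int list" where "a98 = [96, 48, 49, 50, 2, 52, 53, 54, 55, 7, 57, 58, 10, 11, 12, 62, 14, 15, 16, 17, 67, 68, 69, 21, 22, 72, 24, 74, 26, 27, 77, 29, 79, 31, 81, 33, 34, 35, 85, 86, 38, 39, 89, 41, 91, 43, 93, 45, 46, 36, 37, 87, 88, 40, 90, 42, 92, 44, 94, 95, 47, 97, 0, 1, 51, 3, 4, 5, 6, 56, 8, 9, 59, 60, 61, 13, 63, 64, 65, 66, 18, 19, 20, 70, 71, 23, 73, 25, 75, 76, 28, 78, 30, 80, 32, 82, 83, 84]"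
definition b98 :: "int list" where "b98 = [41, 86, 33, 78, 25, 70, 66, 62, 9, 5, 50, 46, 42, 38, 83, 79, 75, 71, 18, 63, 10, 55, 51, 47, 43, 88, 84, 31, 27, 23, 19, 15, 11, 56, 52, 97, 93, 40, 36, 81, 77, 24, 69, 65, 12, 8, 4, 0, 45, 72, 68, 64, 60, 7, 3, 48, 44, 89, 85, 32, 28, 73, 20, 16, 61, 57, 53, 49, 94, 90, 37, 82, 29, 74, 21, 17, 13, 58, 54, 1, 95, 91, 87, 34, 30, 26, 22, 67, 14, 59, 6, 2, 96, 92, 39, 35, 80, 76]"
definition c98 :: "int list" where "c98 = [68, 80, 92, 55, 18, 79, 91, 5, 17, 29, 90, 53, 65, 28, 89, 52, 15, 27, 39, 51, 63, 26, 87, 1, 62, 25, 86, 0, 61, 73, 85, 97, 60, 23, 35, 47, 59, 22, 83, 95, 9, 21, 33, 45, 57, 69, 32, 44, 7, 67, 2, 84, 19, 3, 36, 20, 4, 37, 70, 54, 38, 71, 6, 88, 72, 56, 40, 24, 8, 41, 74, 58, 42, 75, 10, 43, 76, 11, 93, 77, 12, 94, 78, 13, 46, 30, 14, 96, 31, 64, 48, 81, 16, 49, 82, 66, 50, 34]"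
lemma a98_ms: "msort a98 = [0..97]" unfolding a98_def by code_simp
lemma b98_ms: "msort b98 = [0..97]" unfolding b98_def by code_simp
lemma c98_ms: "msort c98 = [0..97]" unfolding c98_def by code_simp
lemma ab98_ms: "msort (map2 (\<lambda>x y. (x - y) mod 98) a98 b98) = [1..49] @ [49..97]" unfolding a98_def b98_def by code_simp
lemma ac98_ms: "msort (map2 (\<lambda>x y. (x - y) mod 98) a98 c98) = [1..49] @ [49..97]" unfolding a98_def c98_def by code_simp
lemma bc98_ms: "msort (map2 (\<lambda>x y. (x - y) mod 98) b98 c98) = [1..49] @ [49..97]" unfolding b98_def c98_def by code_simp
lemma case98: "\<exists>Q. normalized_DCA 4 98 Q \<and> DCA_P1 4 98 Q \<and> DCA_P2 4 98 Q"
proof (rule construct_lists[of "a98" "98" "b98" "c98"])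
  show "length a98 = 98" "length b98 = 98" "length c98 = 98" by (simp_all add: a98_def b98_def c98_def)
qed (simp_all add: a98_ms b98_ms c98_ms ab98_ms ac98_ms bc98_ms)

definition a170 :: "int list" where "a170 = [36, 37, 38, 39, 40, 126, 127, 43, 44, 130, 131, 47, 48, 134, 50, 136, 52, 53, 139, 140, 56, 142, 58, 59, 60, 146, 147, 148, 149, 150, 151, 152, 153, 154, 155, 71, 72, 158, 74, 160, 161, 162, 163, 164, 80, 166, 82, 83, 84, 85, 86, 2, 88, 89, 5, 6, 7, 8, 94, 95, 96, 12, 98, 99, 15, 101, 102, 18, 104, 105, 106, 107, 23, 24, 110, 111, 112, 113, 29, 115, 116, 32, 33, 119, 35, 93, 9, 10, 11, 97, 13, 14, 100, 16, 17, 103, 19, 20, 21, 22, 108, 109, 25, 26, 27, 28, 114, 30, 31, 117, 118, 34, 120, 121, 122, 123, 124, 125, 41, 42, 128, 129, 45, 46, 132, 133, 49, 135, 51, 137, 138, 54, 55, 141, 57, 143, 144, 145, 61, 62, 63, 64, 65, 66, 67, 68, 69, 70, 156, 157, 73, 159, 75, 76, 77, 78, 79, 165, 81, 167, 168, 169, 0, 1, 87, 3, 4, 90, 91, 92]"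
definition b170 :: "int list" where "b170 = [147, 25, 158, 36, 84, 132, 95, 58, 106, 69, 32, 80, 128, 6, 139, 102, 150, 28, 76, 39, 87, 50, 13, 146, 109, 157, 120, 168, 46, 9, 142, 20, 68, 116, 164, 42, 90, 53, 101, 64, 27, 75, 38, 1, 49, 97, 145, 23, 156, 34, 82, 130, 93, 141, 104, 67, 30, 78, 126, 89, 137, 100, 63, 111, 159, 122, 85, 133, 96, 144, 107, 70, 33, 81, 129, 92, 55, 103, 151, 114, 162, 125, 3, 136, 14, 149, 112, 160, 123, 86, 134, 12, 60, 108, 71, 119, 167, 45, 8, 56, 19, 152, 115, 163, 41, 4, 52, 15, 148, 26, 74, 37, 0, 48, 11, 59, 22, 155, 118, 166, 44, 7, 140, 18, 66, 29, 77, 40, 88, 51, 99, 62, 110, 73, 121, 169, 47, 10, 143, 21, 154, 117, 165, 43, 91, 54, 17, 65, 113, 161, 124, 2, 135, 98, 61, 24, 72, 35, 83, 131, 94, 57, 105, 153, 31, 79, 127, 5, 138, 16]"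
definition c170 :: "int list" where "c170 = [163, 90, 102, 114, 126, 138, 150, 77, 89, 16, 113, 40, 52, 64, 161, 3, 15, 27, 39, 51, 148, 75, 2, 14, 111, 123, 50, 62, 74, 1, 13, 25, 37, 49, 61, 158, 85, 12, 109, 36, 133, 60, 157, 84, 11, 23, 120, 132, 144, 156, 168, 10, 107, 34, 46, 58, 70, 82, 9, 106, 33, 130, 57, 154, 81, 93, 105, 32, 44, 141, 68, 165, 7, 104, 116, 128, 140, 152, 79, 91, 103, 115, 42, 54, 151, 63, 160, 87, 99, 26, 38, 135, 147, 159, 86, 98, 110, 122, 134, 146, 73, 0, 97, 24, 121, 48, 145, 72, 169, 96, 108, 35, 47, 59, 71, 83, 95, 22, 119, 131, 143, 155, 167, 94, 21, 118, 45, 142, 69, 166, 8, 20, 117, 129, 56, 153, 80, 92, 19, 31, 43, 55, 67, 164, 6, 18, 30, 127, 139, 66, 78, 5, 17, 29, 41, 53, 65, 162, 4, 101, 28, 125, 137, 149, 76, 88, 100, 112, 124, 136]"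
lemma a170_ms: "msort a170 = [0..169]" unfolding a170_def by code_simp
lemma b170_ms: "msort b170 = [0..169]" unfolding b170_def by code_simp
lemma c170_ms: "msort c170 = [0..169]" unfolding c170_def by code_simp
lemma ab170_ms: "msort (map2 (\<lambda>x y. (x - y) mod 170) a170 b170) = [1..85] @ [85..169]" unfolding a170_def b170_def by code_simp
lemma ac170_ms: "msort (map2 (\<lambda>x y. (x - y) mod 170) a170 c170) = [1..85] @ [85..169]" unfolding a170_def c170_def by code_simp
lemma bc170_ms: "msort (map2 (\<lambda>x y. (x - y) mod 170) b170 c170) = [1..85] @ [85..169]" unfolding b170_def c170_def by code_simp
lemma case170: "\<exists>Q. normalized_DCA 4 170 Q \<and> DCA_P1 4 170 Q \<and> DCA_P2 4 170 Q"
proof (rule construct_lists[of "a170" "170" "b170" "c170"])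
  show "length a170 = 170" "length b170 = 170" "length c170 = 170" by (simp_all add: a170_def b170_def c170_def)
qed (simp_all add: a170_ms b170_ms c170_ms ab170_ms ac170_ms bc170_ms)

definition a242 :: "int list" where "a242 = [62, 184, 64, 186, 187, 188, 68, 69, 70, 71, 193, 73, 195, 196, 197, 198, 78, 79, 201, 81, 82, 83, 84, 85, 207, 87, 88, 210, 90, 212, 213, 93, 94, 95, 96, 97, 219, 220, 100, 101, 102, 103, 225, 105, 106, 228, 108, 230, 110, 232, 233, 113, 235, 115, 116, 117, 118, 119, 241, 0, 122, 2, 3, 4, 5, 6, 128, 129, 130, 10, 132, 133, 13, 14, 136, 137, 17, 18, 140, 141, 142, 22, 144, 145, 25, 26, 148, 28, 150, 30, 31, 32, 154, 34, 35, 36, 37, 38, 160, 40, 162, 163, 43, 44, 45, 46, 47, 169, 49, 50, 172, 173, 174, 54, 176, 177, 57, 58, 180, 181, 182, 112, 234, 114, 236, 237, 238, 239, 240, 120, 121, 1, 123, 124, 125, 126, 127, 7, 8, 9, 131, 11, 12, 134, 135, 15, 16, 138, 139, 19, 20, 21, 143, 23, 24, 146, 147, 27, 149, 29, 151, 152, 153, 33, 155, 156, 157, 158, 159, 39, 161, 41, 42, 164, 165, 166, 167, 168, 48, 170, 171, 51, 52, 53, 175, 55, 56, 178, 179, 59, 60, 61, 183, 63, 185, 65, 66, 67, 189, 190, 191, 192, 72, 194, 74, 75, 76, 77, 199, 200, 80, 202, 203, 204, 205, 206, 86, 208, 209, 89, 211, 91, 92, 214, 215, 216, 217, 218, 98,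 99, 221, 222, 223, 224, 104, 226, 227, 107, 229, 109, 231, 111]"
definition b242 :: "int list" where "b242 = [43, 163, 162, 40, 39, 38, 37, 36, 35, 34, 154, 153, 152, 151, 150, 28, 148, 147, 25, 145, 23, 22, 142, 141, 19, 139, 17, 16, 136, 14, 134, 12, 132, 10, 130, 129, 128, 127, 5, 125, 124, 123, 122, 121, 241, 119, 118, 238, 237, 115, 114, 234, 112, 232, 231, 230, 108, 107, 106, 226, 225, 103, 223, 101, 221, 99, 219, 97, 217, 95, 215, 214, 213, 91, 90, 210, 88, 208, 207, 85, 205, 83, 203, 202, 80, 200, 78, 198, 76, 196, 74, 73, 193, 71, 191, 190, 68, 188, 187, 186, 185, 184, 183, 61, 181, 180, 58, 178, 177, 176, 175, 174, 52, 172, 50, 49, 169, 168, 46, 166, 165, 116, 27, 59, 212, 2, 155, 66, 98, 9, 41, 194, 105, 137, 48, 201, 233, 144, 55, 87, 240, 30, 62, 94, 126, 158, 69, 222, 133, 44, 197, 229, 140, 51, 204, 236, 26, 179, 211, 1, 33, 65, 218, 8, 161, 72, 104, 15, 47, 79, 111, 143, 54, 86, 239, 29, 182, 93, 4, 157, 189, 100, 11, 164, 75, 228, 18, 171, 82, 235, 146, 57, 89, 0, 32, 64, 96, 7, 160, 192, 224, 135, 167, 199, 110, 21, 53, 206, 117, 149, 60, 92, 3, 156, 67, 220, 131, 42, 195, 227, 138, 170, 81, 113, 24, 56, 209, 120, 31, 63, 216, 6, 159, 70, 102, 13, 45, 77, 109, 20, 173, 84]"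
definition c242 :: "int list" where "c242 = [143, 129, 236, 222, 208, 194, 59, 166, 31, 138, 124, 110, 217, 203, 68, 54, 40, 26, 133, 119, 226, 91, 77, 63, 49, 35, 21, 7, 235, 100, 207, 72, 58, 165, 151, 16, 123, 230, 95, 81, 67, 174, 160, 146, 132, 239, 104, 90, 197, 183, 48, 155, 20, 6, 113, 220, 206, 192, 57, 43, 29, 136, 1, 108, 94, 80, 187, 173, 159, 145, 131, 238, 103, 210, 196, 182, 47, 154, 19, 126, 233, 219, 205, 70, 56, 42, 149, 14, 0, 107, 93, 200, 186, 51, 158, 23, 130, 116, 223, 88, 74, 181, 46, 153, 139, 4, 111, 97, 83, 190, 55, 41, 27, 134, 241, 227, 213, 199, 64, 171, 36, 198, 184, 170, 156, 142, 128, 114, 221, 86, 193, 179, 44, 30, 137, 2, 109, 216, 202, 188, 53, 39, 25, 11, 118, 225, 211, 76, 62, 169, 34, 141, 127, 234, 99, 85, 71, 178, 164, 150, 15, 122, 229, 215, 201, 66, 52, 38, 24, 10, 117, 224, 89, 75, 61, 168, 33, 140, 5, 112, 98, 84, 191, 177, 163, 28, 135, 121, 228, 214, 79, 65, 172, 37, 144, 9, 237, 102, 209, 195, 60, 167, 32, 18, 125, 232, 218, 204, 69, 176, 162, 148, 13, 120, 106, 92, 78, 185, 50, 157, 22, 8, 115, 101, 87, 73, 180, 45, 152, 17, 3, 231, 96, 82, 189, 175, 161, 147, 12, 240, 105, 212]"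
lemma a242_ms: "msort a242 = [0..241]" unfolding a242_def by code_simp
lemma b242_ms: "msort b242 = [0..241]" unfolding b242_def by code_simp
lemma c242_ms: "msort c242 = [0..241]" unfolding c242_def by code_simp
lemma ab242_ms: "msort (map2 (\<lambda>x y. (x - y) mod 242) a242 b242) = [1..121] @ [121..241]" unfolding a242_def b242_def by code_simp
lemma ac242_ms: "msort (map2 (\<lambda>x y. (x - y) mod 242) a242 c242) = [1..121] @ [121..241]" unfolding a242_def c242_def by code_simp
lemma bc242_ms: "msort (map2 (\<lambda>x y. (x - y) mod 242) b242 c242) = [1..121] @ [121..241]" unfolding b242_def c242_def by code_simp
lemma case242: "\<exists>Q. normalized_DCA 4 242 Q \<and> DCA_P1 4 242 Q \<and> DCA_P2 4 242 Q"
proof (rule construct_lists[of "a242" "242" "b242" "c242"])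
  show "length a242 = 242" "length b242 = 242" "length c242 = 242" by (simp_all add: a242_def b242_def c242_def)
qed (simp_all add: a242_ms b242_ms c242_ms ab242_ms ac242_ms bc242_ms)

definition a290 :: "int list" where "a290 = [102, 248, 249, 250, 106, 107, 253, 254, 110, 111, 257, 113, 259, 260, 116, 262, 263, 264, 265, 266, 122, 268, 269, 270, 271, 127, 273, 129, 275, 276, 132, 133, 134, 280, 281, 282, 138, 139, 140, 286, 287, 288, 144, 0, 1, 147, 3, 4, 5, 151, 7, 153, 9, 155, 11, 12, 13, 14, 160, 161, 17, 18, 19, 165, 166, 167, 23, 169, 25, 171, 27, 173, 29, 175, 31, 32, 33, 34, 35, 36, 37, 183, 184, 185, 186, 42, 188, 189, 190, 191, 47, 48, 49, 195, 196, 197, 53, 54, 200, 56, 57, 203, 204, 205, 206, 207, 208, 209, 65, 66, 67, 68, 214, 70, 71, 72, 218, 219, 220, 76, 77, 223, 224, 225, 81, 82, 228, 229, 230, 231, 232, 233, 234, 235, 236, 92, 93, 94, 95, 96, 242, 98, 99, 245, 246, 78, 79, 80, 226, 227, 83, 84, 85, 86, 87, 88, 89, 90, 91, 237, 238, 239, 240, 241, 97, 243, 244, 100, 101, 247, 103, 104, 105, 251, 252, 108, 109, 255, 256, 112, 258, 114, 115, 261, 117, 118, 119, 120, 121, 267, 123, 124, 125, 126, 272, 128, 274, 130, 131, 277, 278, 279, 135, 136, 137, 283, 284, 285, 141, 142, 143, 289, 145, 146, 2, 148, 149, 150, 6, 152, 8, 154, 10, 156, 157, 158, 159, 15, 16,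 162, 163, 164, 20, 21, 22, 168, 24, 170, 26, 172, 28, 174, 30, 176, 177, 178, 179, 180, 181, 182, 38, 39, 40, 41, 187, 43, 44, 45, 46, 192, 193, 194, 50, 51, 52, 198, 199, 55, 201, 202, 58, 59, 60, 61, 62, 63, 64, 210, 211, 212, 213, 69, 215, 216, 217, 73, 74, 75, 221, 222]"
definition b290 :: "int list" where "b290 = [186, 110, 34, 248, 172, 241, 20, 89, 158, 227, 151, 75, 289, 68, 137, 61, 130, 54, 268, 192, 116, 185, 109, 33, 247, 171, 95, 164, 88, 157, 81, 150, 219, 143, 67, 136, 205, 129, 53, 122, 191, 260, 39, 108, 177, 246, 170, 239, 163, 232, 156, 80, 4, 73, 287, 211, 280, 59, 273, 197, 266, 190, 114, 183, 107, 31, 100, 24, 238, 162, 86, 10, 224, 148, 217, 141, 210, 134, 203, 127, 196, 120, 189, 258, 37, 106, 30, 244, 23, 92, 16, 230, 154, 223, 2, 216, 285, 209, 133, 57, 271, 195, 119, 43, 112, 36, 105, 29, 98, 22, 91, 160, 84, 8, 222, 146, 70, 284, 63, 277, 56, 125, 49, 118, 187, 256, 180, 249, 28, 97, 166, 90, 14, 228, 7, 221, 0, 214, 283, 207, 276, 200, 124, 48, 262, 18, 87, 11, 225, 149, 218, 142, 66, 135, 204, 128, 52, 121, 45, 259, 38, 252, 176, 245, 169, 93, 17, 231, 155, 79, 3, 72, 286, 65, 279, 58, 272, 51, 265, 44, 113, 182, 251, 175, 99, 168, 237, 161, 85, 9, 78, 147, 71, 140, 64, 278, 202, 126, 50, 264,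 188, 257, 181, 250, 174, 243, 167, 236, 15, 229, 153, 77, 1, 215, 139, 208, 132, 201, 270, 194, 263, 42, 111, 35, 104, 173, 242, 21, 235, 159, 83, 152, 76, 145, 69, 138, 62, 131, 55, 269, 193, 117, 41, 255, 179, 103, 27, 96, 165, 234, 13, 82, 6, 220, 144, 213, 282, 206, 275, 199, 123, 47, 261, 40, 254, 178, 102, 26, 240, 19, 233, 12, 226, 5, 74, 288, 212, 281, 60, 274, 198, 267, 46, 115, 184, 253, 32, 101, 25, 94]"
definition c290 :: "int list" where "c290 = [87, 64, 41, 163, 140, 262, 239, 216, 193, 170, 2, 269, 101, 78, 55, 32, 154, 131, 253, 85, 62, 39, 16, 138, 115, 92, 214, 46, 168, 0, 267, 99, 221, 53, 30, 152, 274, 106, 228, 205, 37, 159, 136, 113, 90, 212, 44, 21, 288, 120, 97, 219, 51, 28, 150, 272, 104, 226, 58, 180, 12, 279, 256, 88, 210, 42, 164, 286, 118, 240, 217, 194, 26, 3, 270, 102, 224, 56, 178, 155, 132, 254, 86, 63, 185, 17, 139, 116, 93, 70, 192, 24, 1, 123, 100, 77, 199, 176, 8, 275, 252, 229, 206, 38, 160, 137, 114, 91, 213, 45, 167, 144, 266, 98, 75, 197, 174, 6, 128, 250, 82, 59, 181, 13, 135, 112, 89, 66, 188, 20, 287, 264, 241, 218, 50, 27, 4, 271, 103, 225, 57, 34, 11, 278, 110, 211, 43, 165, 142, 119, 96, 73, 195, 172, 149, 126, 248, 80, 202, 179, 156, 133, 255, 232, 209, 186, 18, 285, 117, 94, 71,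 48, 25, 147, 124, 246, 223, 200, 177, 9, 276, 108, 230, 207, 184, 161, 283, 260, 237, 69, 191, 23, 145, 122, 244, 76, 198, 175, 7, 129, 251, 83, 60, 182, 14, 281, 258, 235, 67, 189, 166, 143, 265, 242, 74, 196, 173, 5, 127, 249, 81, 203, 35, 157, 134, 111, 233, 65, 187, 19, 141, 263, 95, 72, 49, 171, 148, 125, 247, 79, 201, 33, 10, 277, 109, 231, 208, 40, 162, 284, 261, 238, 215, 47, 169, 146, 268, 245, 222, 54, 31, 153, 130, 107, 84, 61, 183, 15, 282, 259, 236, 68, 190, 22, 289, 121, 243, 220, 52, 29, 151, 273, 105, 227, 204, 36, 158, 280, 257, 234]"
lemma a290_ms: "msort a290 = [0..289]" unfolding a290_def by code_simp
lemma b290_ms: "msort b290 = [0..289]" unfolding b290_def by code_simp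
lemma c290_ms: "msort c290 = [0..289]" unfolding c290_def by code_simp
lemma ab290_ms: "msort (map2 (\<lambda>x y. (x - y) mod 290) a290 b290) = [1..145] @ [145..289]" unfolding a290_def b290_def by code_simp
lemma ac290_ms: "msort (map2 (\<lambda>x y. (x - y) mod 290) a290 c290) = [1..145] @ [145..289]" unfolding a290_def c290_def by code_simp
lemma bc290_ms: "msort (map2 (\<lambda>x y. (x - y) mod 290) b290 c290) = [1..145] @ [145..289]" unfolding b290_def c290_def by code_simp
lemma case290: "\<exists>Q. normalized_DCA 4 290 Q \<and> DCA_P1 4 290 Q \<and> DCA_P2 4 290 Q"
proof (rule construct_lists[of "a290" "290" "b290" "c290"])
  show "length a290 = 290" "length b290 = 290" "length c290 = 290" by (simp_all add: a290_def b290_def c290_def)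
qed (simp_all add: a290_ms b290_ms c290_ms ab290_ms ac290_ms bc290_ms)

definition a338 :: "int list" where "a338 = [38, 39, 209, 41, 211, 212, 213, 45, 46, 216, 217, 218, 219, 51, 221, 53, 54, 224, 225, 57, 227, 228, 60, 61, 62, 63, 64, 234, 66, 236, 68, 69, 70, 240, 72, 73, 243, 75, 245, 77, 247, 248, 249, 250, 82, 252, 253, 85, 255, 256, 257, 258, 259, 91, 261, 93, 263, 264, 96, 266, 267, 99, 100, 101, 102, 103, 273, 274, 275, 276, 277, 109, 279, 280, 112, 113, 283, 115, 116, 286, 287, 288, 120, 290, 291, 123, 293, 294, 126, 296, 297, 129, 299, 131, 132, 133, 303, 135, 305, 137, 307, 139, 309, 310, 311, 312, 144, 314, 146, 316, 317, 318, 150, 151, 321, 153, 154, 324, 325, 157, 158, 159, 160, 330, 162, 163, 164, 334, 166, 167, 168, 0, 170, 2, 172, 173, 174, 6, 7, 8, 9, 179, 11, 181, 13, 183, 184, 185, 17, 187, 19, 189, 21, 191, 192, 193, 194, 195, 27, 28, 198, 30, 200, 32, 33, 203, 204, 36, 206, 169, 1, 171, 3, 4, 5, 175, 176, 177, 178, 10, 180, 12, 182, 14, 15, 16, 186, 18, 188, 20, 190, 22, 23, 24, 25, 26, 196, 197, 29, 199, 31, 201, 202, 34, 35, 205, 37, 207, 208, 40, 210, 42, 43, 44, 214, 215, 47, 48, 49, 50, 220, 52, 222, 223, 55, 56, 226, 58, 59, 229, 230, 231, 232, 233, 65, 235, 67, 237, 238, 239, 71, 241, 242, 74, 244, 76,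 246, 78, 79, 80, 81, 251, 83, 84, 254, 86, 87, 88, 89, 90, 260, 92, 262, 94, 95, 265, 97, 98, 268, 269, 270, 271, 272, 104, 105, 106, 107, 108, 278, 110, 111, 281, 282, 114, 284, 285, 117, 118, 119, 289, 121, 122, 292, 124, 125, 295, 127, 128, 298, 130, 300, 301, 302, 134, 304, 136, 306, 138, 308, 140, 141, 142, 143, 313, 145, 315, 147, 148, 149, 319, 320, 152, 322, 323, 155, 156, 326, 327, 328, 329, 161, 331, 332, 333, 165, 335, 336, 337]"
definition b338 :: "int list" where "b338 = [296, 249, 33, 155, 108, 61, 14, 136, 89, 211, 333, 117, 239, 23, 145, 267, 51, 4, 126, 248, 201, 154, 276, 229, 13, 304, 88, 210, 332, 116, 69, 22, 313, 266, 50, 3, 294, 78, 200, 153, 106, 59, 12, 303, 87, 209, 331, 115, 237, 21, 143, 265, 218, 2, 124, 77, 199, 152, 105, 227, 11, 302, 255, 39, 330, 114, 67, 189, 311, 264, 48, 1, 123, 245, 198, 151, 104, 226, 179, 301, 254, 207, 329, 113, 235, 19, 310, 94, 216, 169, 122, 244, 197, 319, 272, 56, 9, 131, 253, 37, 159, 281, 234, 187, 309, 262, 46, 168, 121, 243, 196, 149, 271, 224, 177, 299, 83, 205, 158, 111, 233, 186, 308, 261, 45, 167, 289, 242, 26, 317, 101, 223, 7, 129, 251, 35, 157, 110, 63, 16, 307, 91, 213, 335, 288, 72, 25, 316, 269, 53, 6, 297, 250, 203, 325, 109, 62, 184, 306, 259, 43, 334, 287, 71, 193, 146, 99, 221, 174,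 321, 274, 58, 180, 133, 86, 208, 161, 283, 236, 20, 142, 95, 217, 170, 292, 76, 29, 320, 273, 57, 10, 132, 85, 38, 160, 282, 66, 188, 141, 263, 47, 0, 291, 75, 28, 150, 103, 225, 178, 300, 84, 206, 328, 112, 65, 18, 140, 93, 215, 337, 290, 74, 27, 318, 102, 55, 8, 130, 252, 36, 327, 280, 64, 17, 139, 92, 214, 336, 120, 73, 195, 148, 270, 54, 176, 298, 82, 204, 326, 279, 232, 185, 138, 260, 44, 166, 119, 241, 194, 147, 100, 222, 175, 128, 81, 34, 156, 278, 231, 15, 137, 90, 212, 165, 118, 240, 24, 315, 268, 52, 5, 127, 80, 202, 324, 277, 230, 183, 305, 258, 42, 164, 286, 70, 192, 314, 98, 220, 173, 295, 79, 32, 323, 107, 60, 182, 135, 257, 41, 163, 285, 238, 191, 144, 97, 219, 172, 125, 247, 31, 322, 275, 228, 181, 134, 256, 40, 162, 284, 68, 190, 312, 96, 49, 171, 293, 246, 30]"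
definition c338 :: "int list" where "c338 = [274, 121, 137, 153, 169, 16, 201, 217, 64, 80, 96, 281, 128, 144, 329, 176, 192, 208, 224, 71, 256, 103, 119, 135, 151, 167, 183, 30, 215, 62, 78, 263, 279, 126, 311, 327, 174, 21, 206, 53, 69, 85, 101, 117, 133, 149, 334, 181, 197, 213, 229, 245, 261, 277, 293, 140, 156, 3, 19, 35, 51, 236, 83, 268, 115, 300, 316, 163, 10, 195, 42, 227, 74, 259, 106, 291, 138, 323, 170, 186, 202, 49, 65, 250, 266, 113, 298, 314, 161, 8, 193, 40, 225, 241, 257, 104, 289, 305, 321, 168, 184, 31, 47, 232, 248, 95, 280, 127, 143, 328, 175, 191, 38, 54, 239, 86, 271, 287, 134, 319, 335, 182, 29, 214, 61, 246, 93, 278, 294, 141, 326, 4, 20, 205, 52, 68, 84, 100, 116, 132, 317, 333, 180, 196, 212, 228, 244, 91, 107, 123, 139, 155, 2, 187, 203, 50, 235, 251, 267, 114, 299, 146, 162, 9, 25, 210, 57, 242, 89, 178, 324, 301, 109, 255, 63, 209, 17, 332, 309, 286, 94, 240, 48, 194, 171, 148, 125, 102, 79, 56, 33, 179, 325, 302, 110, 87, 233, 41, 18, 164, 310, 118, 264, 72, 218, 26, 172, 318, 295, 272, 249, 226, 34, 11, 157, 303, 111, 88, 234, 211, 188, 165, 142, 288, 265, 73, 219, 27, 173, 150, 296, 273, 81, 58, 204, 12, 158, 304, 112, 258, 66, 43, 189, 166, 312, 120, 97, 243, 220, 28, 5, 320, 297, 105, 82, 59, 36, 13, 159, 136, 282,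 90, 67, 44, 190, 336, 313, 290, 98, 75, 221, 198, 6, 152, 129, 275, 252, 60, 37, 14, 160, 306, 283, 260, 237, 45, 22, 337, 145, 122, 99, 76, 222, 199, 7, 322, 130, 276, 253, 230, 207, 15, 330, 307, 284, 92, 238, 46, 23, 0, 315, 292, 269, 77, 223, 200, 177, 154, 131, 108, 254, 231, 39, 185, 331, 308, 285, 262, 70, 216, 24, 1, 147, 124, 270, 247, 55, 32]"
lemma a338_ms: "msort a338 = [0..337]" unfolding a338_def by code_simp
lemma b338_ms: "msort b338 = [0..337]" unfolding b338_def by code_simp
lemma c338_ms: "msort c338 = [0..337]" unfolding c338_def by code_simp
lemma ab338_ms: "msort (map2 (\<lambda>x y. (x - y) mod 338) a338 b338) = [1..169] @ [169..337]" unfolding a338_def b338_def by code_simp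
lemma ac338_ms: "msort (map2 (\<lambda>x y. (x - y) mod 338) a338 c338) = [1..169] @ [169..337]" unfolding a338_def c338_def by code_simp
lemma bc338_ms: "msort (map2 (\<lambda>x y. (x - y) mod 338) b338 c338) = [1..169] @ [169..337]" unfolding b338_def c338_def by code_simp
lemma case338: "\<exists>Q. normalized_DCA 4 338 Q \<and> DCA_P1 4 338 Q \<and> DCA_P2 4 338 Q"
proof (rule construct_lists[of "a338" "338" "b338" "c338"])
  show "length a338 = 338" "length b338 = 338" "length c338 = 338" by (simp_all add: a338_def b338_def c338_def)
qed (simp_all add: a338_ms b338_ms c338_ms ab338_ms ac338_ms bc338_ms)


theorem mainTheorem9:
  shows "\<forall>n::nat \<in> {50, 98, 170, 242, 290, 338}.
           \<exists>Q. normalized_DCA 4 n Q \<and> DCA_P1 4 n Q \<and> DCA_P2 4 n Q"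
  using case50 case98 case170 case242 case290 case338 by auto

end
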